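(* For all $0\le t<1$ and $x\in\mathbb{R}$, $V^*(t,x)\ge f(t,x)$, where $$V^*(t,x)=\begin{cases}\sqrt{1-t}\,\sqrt{2\pi}\,\Phi(-x/\sqrt{1-t})e^{x^2/(2(1-t))}v(C^* ), & x>C^*\sqrt{1-t},\\ f(t,x), & x\le C^*\sqrt{1-t}.\end{cases}$$
   Context: $\Phi$ is the standard normal distribution function. $B^*\approx0.84$ is the unique positive solution of $\sqrt{2\pi}(1-B^2)e^{B^2/2}\Phi(B)=B$. Define $U(t,x)=\sqrt{2\pi(1-t)}(1-(B^* )^2)e^{x^2/(2(1-t))}\Phi(x/\sqrt{1-t})$ for $x<B^*\sqrt{1-t}$, and $U(t,x)=x$ otherwise, for $0\le t<1$. Set $f(t,x)=U(t,x)-x$. For $C\le B^*$ let $v(C)=\frac{1}{\Phi(-C)}[(1-(B^* )^2)\Phi(C)-Ce^{-C^2/2}/\sqrt{2\pi}]$ and $u(C)=1-(B^* )^2-(1-C^2)\Phi(-C)-\frac{C}{\sqrt{2\pi}}e^{-C^2/2}$. $C^*<0$ is the unique negative zero of $u$, which maximizes $v$ on $(-\infty,B^*]$. *)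

theory Defs
  imports "HOL-Probability.Probability"
begin

definition Phi :: "real \<Rightarrow> real" where
  "Phi x = (LBINT s:{..x}. std_normal_density s)"

definition Bstar :: real where
  "Bstar = (THE B. B > 0 \<and> sqrt (2*pi) * (1 - B\<^sup>2) * exp (B\<^sup>2 / 2) * Phi B = B)"

definition U :: "real \<Rightarrow> real \<Rightarrow> real" where
  "U t x = (if x < Bstar * sqrt (1 - t)
            then sqrt (2*pi*(1 - t)) * (1 - Bstar\<^sup>2) * exp (x\<^sup>2 / (2*(1 - t))) * Phi (x / sqrt (1 - t))
            else x)"

definition f :: "real \<Rightarrow> real \<Rightarrow> real" where
  "f t x = U t x - x"

definition v :: "real \<Rightarrow> real" where
  "v C = (1 / Phi (- C)) * ((1 - Bstar\<^sup>2) * Phi C - C * exp (- C\<^sup>2 / 2) / sqrt (2*pi))"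

definition u :: "real \<Rightarrow> real" where
  "u C = 1 - Bstar\<^sup>2 - (1 - C\<^sup>2) * Phi (- C) - C / sqrt (2*pi) * exp (- C\<^sup>2 / 2)"

definition Cstar :: real where
  "Cstar = (THE C. C < 0 \<and> u C = 0)"

definition Vstar :: "real \<Rightarrow> real \<Rightarrow> real" where
  "Vstar t x = (if x > Cstar * sqrt (1 - t)
     then sqrt (1 - t) * sqrt (2*pi) * Phi (- x / sqrt (1 - t)) * exp (x\<^sup>2 / (2*(1 - t))) * v Cstar
     else f t x)"

end

theory Submission
  imports Defs
begin


lemma phi_int: "interval_lebesgue_integrable lborel a b std_normal_density"
  unfolding interval_lebesgue_integrable_def set_integrable_def
  using integrable_mult_indicator[of "einterval a b" lborel std_normal_density]
    integrable_mult_indicator[of "einterval b a" lborel std_normal_density] by auto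

lemma Phi_ereal: "Phi x = (LBINT y=-\<infinity>..ereal x. std_normal_density y)"
proof -
  have "(LBINT y=-\<infinity>..ereal x. std_normal_density y) =
     (LBINT y : {y. -\<infinity> \<le> ereal y \<and> ereal y \<le> ereal x}. std_normal_density y)"
    by (rule interval_integral_Icc') simp
  also have "{y. -\<infinity> \<le> ereal y \<and> ereal y \<le> ereal x} = {..x}" by auto
  finally show ?thesis unfolding Phi_def by simp
qed

lemma Phi_split: "Phi x = Phi 0 + (LBINT y=ereal 0..ereal x. std_normal_density y)"
  unfolding Phi_ereal
  by (rule interval_integral_sum[symmetric], rule phi_int)

lemma Phi_deriv: "(Phi has_real_derivative std_normal_density x) (at x)"
proof -
  let ?a = "-\<bar>x\<bar>-1" and ?b = "\<bar>x\<bar>+1"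
  have c: "continuous_on {?a..?b} std_normal_density"
    unfolding std_normal_density_def[abs_def] by (intro continuous_intros) auto
  have "((\<lambda>u. LBINT y=ereal 0..ereal u. std_normal_density y) has_vector_derivative std_normal_density x) (at x within {?a..?b})"
    by (rule interval_integral_FTC2[OF _ _ c]) auto
  then have "((\<lambda>u. LBINT y=ereal 0..ereal u. std_normal_density y) has_vector_derivative std_normal_density x) (at x within {?a<..<?b})"
    by (rule has_vector_derivative_within_subset) auto
  then have "((\<lambda>u. LBINT y=ereal 0..ereal u. std_normal_density y) has_vector_derivative std_normal_density x) (at x)"
    by (subst (asm) has_vector_derivative_within_open) auto
  then have "((\<lambda>u. Phi 0 + (LBINT y=ereal 0..ereal u. std_normal_density y)) has_real_derivative std_normal_density x) (at x)"
    unfolding has_real_derivative_iff_has_vector_derivative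
    by (auto intro!: derivative_eq_intros)
  then show ?thesis using Phi_split by (metis (no_types) ext)
qed

lemma Phi_nonneg: "Phi x \<ge> 0"
  unfolding Phi_def set_lebesgue_integral_def
  by (rule integral_nonneg_AE) (auto simp: indicator_def)

lemma phi_even: "std_normal_density (-x) = std_normal_density x"
  by (simp add: std_normal_density_def)

lemma Phi_sum_const: "Phi x + Phi (-x) = Phi 0 + Phi 0"
proof -
  have d: "\<And>y. ((\<lambda>y. Phi y + Phi (-y)) has_real_derivative 0) (at y)"
  proof -
    fix y
    have "((\<lambda>y. Phi y + Phi (-y)) has_real_derivative std_normal_density y + std_normal_density (-y) * (-1)) (at y)"
      by (rule DERIV_add[OF Phi_deriv], rule DERIV_chain2[OF Phi_deriv]) (auto intro!: derivative_eq_intros)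
    then show "((\<lambda>y. Phi y + Phi (-y)) has_real_derivative 0) (at y)" by (simp add: phi_even)
  qed
  show ?thesis using DERIV_isconst_all[of "\<lambda>y. Phi y + Phi (-y)" x 0] d by simp
qed

lemma Phi0: "Phi 0 = 1/2"
proof -
  have "1 = (LBINT y=-\<infinity>..\<infinity>. std_normal_density y)"
    by (simp add: interval_lebesgue_integral_def set_lebesgue_integral_def)
  also have "\<dots> = Phi 0 + (LBINT y=ereal 0..\<infinity>. std_normal_density y)"
    unfolding Phi_ereal
    by (rule interval_integral_sum[symmetric], rule phi_int)
  also have "(LBINT y=ereal 0..\<infinity>. std_normal_density y) = (LBINT y=-\<infinity>..ereal 0. std_normal_density y)"
    by (subst interval_integral_reflect) (simp add: phi_even zero_ereal_def[symmetric])
  also have "\<dots> = Phi 0" by (simp add: Phi_ereal)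
  finally show ?thesis by simp
qed

lemma Phi_sym: "Phi (-x) = 1 - Phi x"
  using Phi_sum_const[of x] Phi0 by simp



lemma phi_pos: "std_normal_density y > 0"
  by (simp add: normal_density_pos)

lemma phi_deriv: "(std_normal_density has_real_derivative (- y * std_normal_density y)) (at y)"
proof -
  have "((\<lambda>y. 1 / sqrt (2 * pi) * exp (- y\<^sup>2 / 2)) has_real_derivative
     1 / sqrt (2 * pi) * (exp (- y\<^sup>2 / 2) * (- (2 * y ^ 1 * 1) / 2))) (at y)"
    by (intro DERIV_cmult DERIV_chain2[OF DERIV_exp]) (auto intro!: derivative_eq_intros)
  then show ?thesis unfolding std_normal_density_def[abs_def] by (simp add: algebra_simps)
qed

lemma Phi_cont: "continuous_on S Phi"
  by (meson DERIV_isCont Phi_deriv continuous_at_imp_continuous_on)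

lemma Phi_strict_mono: assumes "a < b" shows "Phi a < Phi b"
  using DERIV_pos_imp_increasing[OF assms, of Phi] Phi_deriv phi_pos by blast

lemma Phi_pos: "Phi x > 0"
  using Phi_strict_mono[of "x-1" x] Phi_nonneg[of "x-1"] by simp

definition G :: "real \<Rightarrow> real" where
  "G y = (1 - y\<^sup>2) * Phi y - y * std_normal_density y"

lemma G_deriv: "(G has_real_derivative (-2*y*Phi y)) (at y)"
proof -
  have "((\<lambda>y. (1 - y\<^sup>2) * Phi y - y * std_normal_density y) has_real_derivative
      ((-(2*y)) * Phi y + (1 - y\<^sup>2) * std_normal_density y - (1 * std_normal_density y + y * (- y * std_normal_density y)))) (at y)"
  proof -
    have d1: "((\<lambda>y. 1 - y\<^sup>2) has_real_derivative -(2*y)) (at y)" by (auto intro!: derivative_eq_intros)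
    have d2: "((\<lambda>y. y) has_real_derivative 1) (at y)" by simp
    show ?thesis by (rule DERIV_cong[OF DERIV_diff[OF DERIV_mult[OF d1 Phi_deriv] DERIV_mult[OF d2 phi_deriv]]]) (simp add: algebra_simps)
  qed
  then show ?thesis unfolding G_def[abs_def] by (simp add: algebra_simps power2_eq_square)
qed

lemma G_strict_anti: assumes "0 \<le> a" "a < b" shows "G b < G a"
proof -
  obtain z where z: "a < z" "z < b" "G b - G a = (b - a) * (-2*z*Phi z)"
    using MVT2[OF assms(2), of G "\<lambda>y. -2*y*Phi y"] G_deriv by blast
  have "z * Phi z > 0" using z assms Phi_pos[of z] by simp
  then have "(b - a) * (z*Phi z) > 0" using z by simp
  moreover have "(b - a) * (-2*z*Phi z) = -2 * ((b - a) * (z*Phi z))" by simp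
  ultimately show ?thesis using z by linarith
qed

lemma G0: "G 0 = 1/2" by (simp add: G_def Phi0)
lemma G1: "G 1 < 0" using phi_pos[of 1] by (simp add: G_def)

lemma G_pos_small: assumes "0 < y" "y\<^sup>2 \<le> 1/2" shows "G y > 0"
proof -
  obtain z where z: "0 < z" "z < y" "Phi y - Phi 0 = (y - 0) * std_normal_density z"
    using MVT2[OF assms(1), of Phi std_normal_density] Phi_deriv by blast
  have "z\<^sup>2 \<le> y\<^sup>2" using z by (simp add: power_mono)
  then have "exp (- y\<^sup>2 / 2) \<le> exp (- z\<^sup>2 / 2)" by simp
  then have "std_normal_density z \<ge> std_normal_density y"
    unfolding std_normal_density_def by (simp add: divide_right_mono)
  then have "y * std_normal_density y \<le> y * std_normal_density z"
    using assms by (simp add: mult_left_mono)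
  moreover have "Phi y - Phi 0 = y * std_normal_density z" using z(3) by (simp only: diff_zero)
  ultimately have P: "Phi y \<ge> 1/2 + y * std_normal_density y"
    using Phi0 by linarith
  have y1: "y \<le> 1" by (rule power2_le_imp_le) (use assms in auto)
  have pi4: "sqrt (2*pi) > 2" by (rule real_less_rsqrt) (use pi_gt3 in simp)
  have pb: "std_normal_density y < 1/2"
  proof -
    have "std_normal_density y \<le> 1 / sqrt (2*pi)" unfolding std_normal_density_def
      using mult_left_mono[of "exp (- y\<^sup>2 / 2)" 1 "1/sqrt(2*pi)"] by simp
    also have "\<dots> < 1/2" using pi4 by (simp add: divide_simps)
    finally show ?thesis .
  qed
  have A1: "G y \<ge> (1 - y\<^sup>2) * (1/2 + y * std_normal_density y) - y * std_normal_density y"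
    unfolding G_def using P assms by (intro diff_right_mono mult_left_mono) auto
  have A2: "(1 - y\<^sup>2) * (1/2 + y * std_normal_density y) - y * std_normal_density y = (1 - y\<^sup>2)/2 - y\<^sup>2 * (y * std_normal_density y)"
    by (simp add: algebra_simps)
  have A: "G y \<ge> (1 - y\<^sup>2)/2 - y\<^sup>2 * (y * std_normal_density y)" using A1 A2 by linarith
  have "y * std_normal_density y \<le> 1 * std_normal_density y"
    using y1 phi_pos[of y] by (intro mult_right_mono) auto
  then have yp: "y * std_normal_density y < 1/2" using pb by linarith
  have "y\<^sup>2 * (y * std_normal_density y) \<le> (1/2) * (y * std_normal_density y)"
    using assms phi_pos[of y] by (intro mult_right_mono) auto
  then have "y\<^sup>2 * (y * std_normal_density y) < 1/4 " using yp by linarith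
  moreover have "(1 - y\<^sup>2)/2 \<ge> 1/4" using assms by simp
  ultimately show ?thesis using A by linarith
qed

lemma Beq_iff: "(sqrt (2*pi) * (1 - B\<^sup>2) * exp (B\<^sup>2 / 2) * Phi B = B) \<longleftrightarrow> G B = 0"
proof -
  have e: "sqrt (2*pi) * exp (B\<^sup>2 / 2) * std_normal_density B = 1"
    by (simp add: std_normal_density_def exp_minus field_simps)
  have "(sqrt (2*pi) * (1 - B\<^sup>2) * exp (B\<^sup>2 / 2) * Phi B = B) \<longleftrightarrow>
        (sqrt (2*pi) * (1 - B\<^sup>2) * exp (B\<^sup>2 / 2) * Phi B * std_normal_density B = B * std_normal_density B)"
    using phi_pos[of B] by simp
  also have "sqrt (2*pi) * (1 - B\<^sup>2) * exp (B\<^sup>2 / 2) * Phi B * std_normal_density B = (1 - B\<^sup>2) * Phi B"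
    using e by (simp add: algebra_simps)
  finally show ?thesis by (simp add: G_def)
qed

lemma B_ex1: "\<exists>!B. B > 0 \<and> sqrt (2*pi) * (1 - B\<^sup>2) * exp (B\<^sup>2 / 2) * Phi B = B"
proof -
  have c: "continuous_on {0..1} G"
    by (meson DERIV_isCont G_deriv continuous_at_imp_continuous_on)
  obtain B where B: "0 \<le> B" "B \<le> 1" "G B = 0" using IVT2'[of G 1 0 0] c G0 G1 by auto
  have "B \<noteq> 0" using B G0 by auto
  then have "B > 0" using B by simp
  moreover have "\<And>B'. B' > 0 \<Longrightarrow> G B' = 0 \<Longrightarrow> B' = B"
    by (metis B(3) \<open>B > 0\<close> G_strict_anti linorder_neqE_linordered_idom less_imp_le order_less_irrefl)
  ultimately show ?thesis using B unfolding Beq_iff by blast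
qed

lemma Bstar_props: "Bstar > 0" "G Bstar = 0" "Bstar < 1" "Bstar\<^sup>2 > 1/2"
proof -
  have P: "Bstar > 0 \<and> sqrt (2*pi) * (1 - Bstar\<^sup>2) * exp (Bstar\<^sup>2 / 2) * Phi Bstar = Bstar"
    unfolding Bstar_def by (rule theI'[OF B_ex1])
  then show B0: "Bstar > 0" and GB: "G Bstar = 0" using Beq_iff by auto
  show "Bstar < 1"
  proof (rule ccontr)
    assume "\<not> Bstar < 1"
    then have "Bstar = 1 \<or> 1 < Bstar" by auto
    then show False using G1 GB G_strict_anti[of 1 Bstar] by auto
  qed
  show "Bstar\<^sup>2 > 1/2" using G_pos_small[OF B0] GB by force
qed



lemma u_alt: "u C = 1 - Bstar\<^sup>2 - (1 - C\<^sup>2) * Phi (- C) - C * std_normal_density C"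
  by (simp add: u_def std_normal_density_def)

lemma PhiM_deriv: "((\<lambda>C. Phi (- C)) has_real_derivative - std_normal_density C) (at C)"
proof -
  have "((\<lambda>C. Phi (- C)) has_real_derivative std_normal_density (- C) * (-1)) (at C)"
    by (rule DERIV_chain2[OF Phi_deriv]) (auto intro!: derivative_eq_intros)
  then show ?thesis by (simp add: phi_even)
qed

lemma u_deriv: "(u has_real_derivative (2 * C * Phi (- C))) (at C)"
proof -
  have d1: "((\<lambda>y. 1 - y\<^sup>2) has_real_derivative -(2*C)) (at C)" by (auto intro!: derivative_eq_intros)
  have d2: "((\<lambda>y. y) has_real_derivative 1) (at C)" by simp
  have d0: "((\<lambda>y. 1 - Bstar\<^sup>2) has_real_derivative 0) (at C)" by simp
  have "((\<lambda>C. 1 - Bstar\<^sup>2 - (1 - C\<^sup>2) * Phi (- C) - C * std_normal_density C) has_real_derivative (2 * C * Phi (- C))) (at C)"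
    by (rule DERIV_cong[OF DERIV_diff[OF DERIV_diff[OF d0 DERIV_mult[OF d1 PhiM_deriv]] DERIV_mult[OF d2 phi_deriv]]])
       (simp add: algebra_simps power2_eq_square)
  then show ?thesis unfolding u_alt[abs_def] .
qed

lemma u_cont: "continuous_on S u"
  by (meson DERIV_isCont u_deriv continuous_at_imp_continuous_on)

lemma u_strict_anti: assumes "a < b" "b \<le> 0" shows "u b < u a"
proof -
  obtain z where z: "a < z" "z < b" "u b - u a = (b - a) * (2*z*Phi (-z))"
    using MVT2[OF assms(1), of u "\<lambda>y. 2*y*Phi (-y)"] u_deriv by blast
  have zz: "(-z) * Phi (-z) > 0" using z assms Phi_pos[of "-z"] by (intro mult_pos_pos) auto
  have "b - a > 0" using z by simp
  from mult_pos_pos[OF this zz] have "(b - a) * ((-z)*Phi (-z)) > 0" .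
  moreover have "(b - a) * (2*z*Phi (-z)) = -2 * ((b - a) * ((-z)*Phi (-z)))" by simp
  ultimately show ?thesis using z by linarith
qed

lemma u_strict_mono: assumes "0 \<le> a" "a < b" shows "u a < u b"
proof -
  obtain z where z: "a < z" "z < b" "u b - u a = (b - a) * (2*z*Phi (-z))"
    using MVT2[OF assms(2), of u "\<lambda>y. 2*y*Phi (-y)"] u_deriv by blast
  have "z * Phi (-z) > 0" using z assms Phi_pos[of "-z"] by simp
  then have "(b - a) * (z*Phi (-z)) > 0" using z by simp
  moreover have "(b - a) * (2*z*Phi (-z)) = 2 * ((b - a) * (z*Phi (-z)))" by simp
  ultimately show ?thesis using z by linarith
qed

lemma u0: "u 0 < 0" using Bstar_props(4) by (simp add: u_alt Phi0)

lemma um2: "u (-2) > 0"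
proof -
  have "u (-2) = 1 - Bstar\<^sup>2 + 3 * Phi 2 + 2 * std_normal_density (-2)" by (simp add: u_alt)
  moreover have "Bstar\<^sup>2 < 1"
    using mult_strict_mono[of Bstar 1 Bstar 1] Bstar_props(1,3) by (simp add: power2_eq_square)
  ultimately show ?thesis using Phi_nonneg[of 2] phi_pos[of "-2"] by linarith
qed

lemma uB: "u Bstar = 0"
  using Bstar_props(2) by (simp add: u_alt G_def Phi_sym algebra_simps)

lemma C_ex1: "\<exists>!C. C < 0 \<and> u C = 0"
proof -
  obtain C where C: "-2 \<le> C" "C \<le> 0" "u C = 0" using IVT2'[of u 0 0 "-2"] u_cont u0 um2 by auto
  have "C \<noteq> 0" using C u0 by auto
  then have "C < 0" using C by simp
  moreover have "\<And>C'. C' < 0 \<Longrightarrow> u C' = 0 \<Longrightarrow> C' = C"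
    by (metis C(3) \<open>C < 0\<close> u_strict_anti linorder_neqE_linordered_idom less_imp_le order_less_irrefl)
  ultimately show ?thesis using C by blast
qed

lemma Cstar_props: "Cstar < 0" "u Cstar = 0"
proof -
  have "Cstar < 0 \<and> u Cstar = 0" unfolding Cstar_def by (rule theI'[OF C_ex1])
  then show "Cstar < 0" "u Cstar = 0" by auto
qed

lemma u_nonpos: assumes "Cstar \<le> C" "C \<le> Bstar" shows "u C \<le> 0"
proof (cases "C \<le> 0")
  case True
  then show ?thesis using assms Cstar_props u_strict_anti[of Cstar C]
    by (cases "C = Cstar") auto
next
  case False
  then show ?thesis using assms uB u_strict_mono[of C Bstar]
    by (cases "C = Bstar") auto
qed

definition N :: "real \<Rightarrow> real" where
  "N C = (1 - Bstar\<^sup>2) * Phi C - C * std_normal_density C"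

lemma v_alt: "v C = N C / Phi (- C)"
  by (simp add: v_def N_def std_normal_density_def)

lemma N_deriv: "(N has_real_derivative std_normal_density C * (C\<^sup>2 - Bstar\<^sup>2)) (at C)"
proof -
  have d2: "((\<lambda>y. y) has_real_derivative 1) (at C)" by simp
  have d0: "((\<lambda>y. 1 - Bstar\<^sup>2) has_real_derivative 0) (at C)" by simp
  show ?thesis unfolding N_def[abs_def]
    by (rule DERIV_cong[OF DERIV_diff[OF DERIV_mult[OF d0 Phi_deriv] DERIV_mult[OF d2 phi_deriv]]])
       (simp add: algebra_simps power2_eq_square)
qed

lemma v_deriv: "(v has_real_derivative std_normal_density C * u C / (Phi (-C) * Phi (-C))) (at C)"
proof -
  have ne: "Phi (-C) \<noteq> 0" using Phi_pos[of "-C"] by simp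
  have "((\<lambda>C. N C / Phi (- C)) has_real_derivative
     (std_normal_density C * (C\<^sup>2 - Bstar\<^sup>2) * Phi (-C) - N C * (- std_normal_density C)) / (Phi (-C) * Phi (-C))) (at C)"
    by (rule DERIV_divide[OF N_deriv PhiM_deriv ne])
  moreover have "std_normal_density C * (C\<^sup>2 - Bstar\<^sup>2) * Phi (-C) - N C * (- std_normal_density C) = std_normal_density C * u C"
  proof -
    have pc: "Phi C = 1 - Phi (-C)" using Phi_sym[of C] by simp
    show ?thesis by (simp add: N_def u_alt pc algebra_simps)
  qed
  ultimately show ?thesis unfolding v_alt[abs_def] by simp
qed

lemma v_anti: assumes "Cstar \<le> y" "y \<le> Bstar" shows "v y \<le> v Cstar"
proof (rule DERIV_nonpos_imp_nonincreasing[OF assms(1)])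
  fix x assume x: "Cstar \<le> x" "x \<le> y"
  have "u x \<le> 0" using u_nonpos x assms by simp
  then have "std_normal_density x * u x / (Phi (-x) * Phi (-x)) \<le> 0"
    using phi_pos[of x] Phi_pos[of "-x"] by (simp add: divide_nonpos_pos mult_nonneg_nonpos)
  then show "\<exists>d. (v has_real_derivative d) (at x) \<and> d \<le> 0" using v_deriv by blast
qed

lemma vB: "v Bstar = 0"
  using Bstar_props(2) by (simp add: v_alt N_def G_def)

lemma vC_nonneg: "v Cstar \<ge> 0"
  using v_anti[of Bstar] vB Cstar_props Bstar_props by simp



theorem lemma3p2:
  fixes t x :: real
  assumes "0 \<le> t" and "t < 1"
  shows "Vstar t x \<ge> f t x"
proof -
  define s where "s = sqrt (1 - t)"
  have s0: "s > 0" using assms by (simp add: s_def)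
  have ss: "s * s = 1 - t" using assms by (simp add: s_def)
  define y where "y = x / s"
  have xy: "x = s * y" using s0 by (simp add: y_def)
  have ex: "x\<^sup>2 / (2 * (1 - t)) = y\<^sup>2 / 2"
    using s0 by (simp add: xy ss[symmetric] power2_eq_square)
  have mx: "- x / sqrt (1 - t) = - y" by (simp add: y_def s_def)
  have px: "x / sqrt (1 - t) = y" by (simp add: y_def s_def)
  have sq: "sqrt (2*pi*(1 - t)) = sqrt (2*pi) * s" by (simp add: s_def real_sqrt_mult)
  define E where "E = exp (y\<^sup>2 / 2)"
  define K where "K = s * sqrt (2*pi) * E * Phi (- y)"
  have K0: "K \<ge> 0" using s0 Phi_pos[of "-y"] by (simp add: K_def E_def)
  have eph: "sqrt (2*pi) * E * std_normal_density y = 1"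
    by (simp add: E_def std_normal_density_def exp_minus field_simps)
  show ?thesis
  proof (cases "x > Cstar * s")
    case False
    then show ?thesis by (simp add: Vstar_def s_def)
  next
    case True
    then have yC: "y > Cstar" using s0 by (simp add: xy)
    have "Vstar t x = sqrt (1 - t) * sqrt (2*pi) * Phi (- x / sqrt (1 - t)) * exp (x\<^sup>2 / (2*(1 - t))) * v Cstar"
      using True by (simp add: Vstar_def s_def)
    also have "\<dots> = K * v Cstar" unfolding mx ex by (simp add: K_def E_def s_def)
    finally have V: "Vstar t x = K * v Cstar" .
    show ?thesis
    proof (cases "x < Bstar * s")
      case False
      then have "f t x = 0" by (simp add: f_def U_def s_def)
      then show ?thesis using V K0 vC_nonneg by simp
    next
      case True
      then have yB: "y < Bstar" using s0 by (simp add: xy)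
      have "f t x = sqrt (2*pi*(1 - t)) * (1 - Bstar\<^sup>2) * exp (x\<^sup>2 / (2*(1 - t))) * Phi (x / sqrt (1 - t)) - x"
        using True by (simp add: f_def U_def s_def)
      also have "\<dots> = sqrt (2*pi) * s * (1 - Bstar\<^sup>2) * E * Phi y - s * y"
        unfolding sq ex px E_def using xy by simp
      also have "\<dots> = s * sqrt (2*pi) * E * N y"
        using eph by (simp add: N_def algebra_simps)
      also have "\<dots> = K * v y"
        using Phi_pos[of "-y"] by (simp add: K_def v_alt)
      also have "\<dots> \<le> K * v Cstar"
        using v_anti[of y] yC yB K0 by (intro mult_left_mono) auto
      finally show ?thesis using V by simp
    qed
  qed
qed


end
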